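(* Let $\mathsf N>1$, $p\in(2,6)$, $\theta\in(\vartheta(p,3),1)$ and $\beta=1-\frac{p-2}{2p\theta}$. Then the equation $\theta(6-p)\big(x^\beta-\mathsf N\big)x-\big(2p\theta-3(p-2)\big)\Big(\theta\big(x^\beta-\mathsf N\big)+(1-\theta)(x-1)\mathsf N\Big)=0$ has a unique root in the interval $(\mathsf N^{1/\beta},\infty)$.
   Context: $\vartheta(p,3)=\frac{3(p-2)}{2p}$. *)

theory Defs
  imports Complex_Main
begin

definition vartheta :: "real \<Rightarrow> real \<Rightarrow> real" where
  "vartheta p d = d * (p - 2) / (2 * p)"

end

theory Submission
  imports Defs "HOL-Analysis.Analysis"
begin

theorem lemma2:
  fixes N p \<theta> \<beta> :: real
  assumes "N > 1" and "2 < p" and "p < 6"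
    and "vartheta p 3 < \<theta>" and "\<theta> < 1"
    and "\<beta> = 1 - (p - 2) / (2 * p * \<theta>)"
  shows "\<exists>!x. x \<in> {N powr (1 / \<beta>)<..} \<and>
    \<theta> * (6 - p) * (x powr \<beta> - N) * x
      - (2 * p * \<theta> - 3 * (p - 2)) * (\<theta> * (x powr \<beta> - N) + (1 - \<theta>) * (x - 1) * N) = 0"
proof -
  define a where "a = \<theta> * (6 - p)"
  define c where "c = 2 * p * \<theta> - 3 * (p - 2)"
  define F where "F = (\<lambda>x::real. a * (x powr \<beta> - N) * x - c * (\<theta> * (x powr \<beta> - N) + (1 - \<theta>) * (x - 1) * N))"
  have th0: "3 * (p - 2) < 2 * p * \<theta>" using assms(2,4) by (simp add: vartheta_def field_simps)
  have thpos: "\<theta> > 0" using th0 assms(2) by (smt (verit) mult_nonneg_nonpos)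
  have cpos: "c > 0" using th0 c_def by simp
  have apos: "a > 0" using thpos assms(3) a_def by simp
  have q0: "(p - 2) / (2 * p * \<theta>) > 0" using thpos assms(2) by simp
  have q1: "(p - 2) / (2 * p * \<theta>) < 1/3" using th0 thpos assms(2) by (simp add: field_simps)
  have bpos: "\<beta> > 0" and blt: "\<beta> < 1" using q0 q1 assms(6) by linarith+
  define x0 where "x0 = N powr (1 / \<beta>)"
  have x0gt: "x0 > 1" unfolding x0_def using powr_less_mono2[of "1/\<beta>" 1 N] assms(1) bpos by simp
  have x0b: "x0 powr \<beta> = N" unfolding x0_def using assms(1) bpos by (simp add: powr_powr)
  have Fx0: "F x0 < 0" unfolding F_def x0b using cpos thpos assms(1,5) x0gt by simp
  define F' where "F' = (\<lambda>x::real. a * ((\<beta> * x powr (\<beta> - 1)) * x + (x powr \<beta> - N)) - c * (\<theta> * (\<beta> * x powr (\<beta> - 1)) + (1 - \<theta>) * N))"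
  define F'' where "F'' = (\<lambda>x::real. a * ((\<beta> * ((\<beta> - 1) * x powr (\<beta> - 1 - 1))) * x + \<beta> * x powr (\<beta> - 1) + \<beta> * x powr (\<beta> - 1)) - c * (\<theta> * (\<beta> * ((\<beta> - 1) * x powr (\<beta> - 1 - 1)))))"
  have conv: "convex_on {0<..} F"
  proof (rule f''_ge0_imp_convex[where f' = F' and f'' = F''])
    show "convex {0::real<..}" by simp
    fix x :: real assume x: "x \<in> {0<..}"
    show "DERIV F x :> F' x" unfolding F_def F'_def using x
      by (auto intro!: derivative_eq_intros simp: algebra_simps)
    show "DERIV F' x :> F'' x" unfolding F'_def F''_def using x
      by (auto intro!: derivative_eq_intros simp: algebra_simps)
    have e: "x powr (\<beta> - 1 - 1) * x = x powr (\<beta> - 1)" using x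
      using powr_add[of x "\<beta> - 1 - 1" 1] by simp
    have "F'' x = a * \<beta> * (\<beta> + 1) * x powr (\<beta> - 1) + c * \<theta> * \<beta> * (1 - \<beta>) * x powr (\<beta> - 1 - 1)"
      unfolding F''_def using e by (simp add: algebra_simps)
    also have "\<dots> \<ge> 0" using apos cpos thpos bpos blt by (intro add_nonneg_nonneg mult_nonneg_nonneg) auto
    finally show "F'' x \<ge> 0" .
  qed
  define K where "K = a * N + c * \<theta> + c * (1 - \<theta>) * N"
  have Kpos: "K > 0" unfolding K_def using apos cpos thpos assms(1,5) by (simp add: add_pos_pos)
  define X where "X = max 1 (max x0 ((K / a) powr (1 / \<beta>))) + 1"
  have X1: "X > 1" and Xx0: "X > x0" and XK: "X > (K / a) powr (1 / \<beta>)" unfolding X_def by auto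
  have "X powr \<beta> > ((K / a) powr (1 / \<beta>)) powr \<beta>"
    using XK bpos by (intro powr_less_mono2) auto
  hence XbK: "X powr \<beta> > K / a" using bpos Kpos apos by (simp add: powr_powr)
  have Xb: "X powr \<beta> \<le> X" using X1 blt powr_mono[of \<beta> 1 X] by simp
  have "F X \<ge> X * (a * X powr \<beta> - K)"
  proof -
    have "F X = a * X powr \<beta> * X - a * N * X - c * \<theta> * X powr \<beta> + c * \<theta> * N - c * (1 - \<theta>) * N * X + c * (1 - \<theta>) * N"
      unfolding F_def by (simp add: algebra_simps)
    moreover have "c * \<theta> * X powr \<beta> \<le> c * \<theta> * X" using Xb cpos thpos by simp
    moreover have "c * \<theta> * N \<ge> 0" "c * (1 - \<theta>) * N \<ge> 0" using cpos thpos assms(1,5) by auto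
    ultimately show ?thesis unfolding K_def by (simp add: algebra_simps)
  qed
  moreover have "a * X powr \<beta> - K > 0" using XbK apos by (simp add: field_simps)
  ultimately have FX: "F X > 0" using X1 by (smt (verit) mult_pos_pos)
  have cont: "\<forall>x. x0 \<le> x \<and> x \<le> X \<longrightarrow> isCont F x"
    using x0gt unfolding F_def by (auto intro!: continuous_intros)
  obtain r where r: "x0 \<le> r" "r \<le> X" "F r = 0"
    using IVT[of F x0 0 X] Fx0 FX Xx0 cont by auto
  have rgt: "r > x0" using r Fx0 by (cases "r = x0") auto
  have uniq: "y = z" if y: "y > x0" "F y = 0" and z: "z > x0" "F z = 0" for y z
  proof (rule ccontr)
    assume "y \<noteq> z"
    then consider "y < z" | "z < y" by linarith
    then show False
    proof cases
      case 1
      define t where "t = (y - x0) / (z - x0)"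
      have t: "0 \<le> t" "t \<le> 1" using 1 y z unfolding t_def by auto
      have tz: "t * (z - x0) = y - x0" using 1 y unfolding t_def by simp
      have yy: "(1 - t) *\<^sub>R x0 + t *\<^sub>R z = y" using tz by (simp add: algebra_simps)
      have "F y \<le> (1 - t) * F x0 + t * F z" using convex_onD[OF conv t, of x0 z] x0gt z yy by simp
      moreover have "(1 - t) * F x0 < 0" using Fx0 t 1 y unfolding t_def by (simp add: mult_pos_neg divide_less_eq)
      ultimately show False using y z by simp
    next
      case 2
      define t where "t = (z - x0) / (y - x0)"
      have t: "0 \<le> t" "t \<le> 1" using 2 y z unfolding t_def by auto
      have tz: "t * (y - x0) = z - x0" using 2 z unfolding t_def by simp
      have yy: "(1 - t) *\<^sub>R x0 + t *\<^sub>R y = z" using tz by (simp add: algebra_simps)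
      have "F z \<le> (1 - t) * F x0 + t * F y" using convex_onD[OF conv t, of x0 y] x0gt y yy by simp
      moreover have "(1 - t) * F x0 < 0" using Fx0 t 2 z unfolding t_def by (simp add: mult_pos_neg divide_less_eq)
      ultimately show False using y z by simp
    qed
  qed
  show ?thesis
    unfolding x0_def[symmetric]
    apply (rule ex1I[of _ r])
    using r rgt uniq unfolding F_def a_def c_def by auto
qed

end
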